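(* Let $\eta_1,\eta_3\in[0,1]$ and $\eta_2\ge0$, and define $z^m:=\min\{\eta_2,1\}$ and $z^b:=\min\{\eta_1+\eta_2+\eta_3,1\}-z^m$. Then $$(\eta_1+\eta_3-\eta_1\eta_3)\,e^{-z^m}+1-e^{-z^m}\ \ge\ \frac{2}{e}\,z^b+\frac{3}{2e}\,z^m.$$ *)

theory Defs
  imports Complex_Main
begin

end

theory Submission imports Defs begin
lemma polyA: fixes m c :: real assumes "0\<le>m" "m\<le>1" "0 \<le> c" "c \<le> 0.3679"
  shows "1 - 1/(1+m+m^2/2+m^3/6) \<ge> 3*m/2*c"
proof -
  define P where "P = 1+m+m^2/2+m^3/6"
  have P: "P \<ge> 1" using assms unfolding P_def by simp
  define Q where "Q = m*P"
  have Q: "Q = m + m^2 + m^3/2 + m^4/6" unfolding Q_def P_def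
    by (simp add: algebra_simps power2_eq_square power3_eq_cube power4_eq_xxxx)
  have a: "Q*c \<le> Q*(3679/10000)" using assms P unfolding Q_def by (intro mult_left_mono) auto
  have m2: "m^2 \<le> m^1" "m^3 \<le> m^1" "m^4 \<le> m^1" using assms by (intro power_decreasing; simp)+
  have "P - 1 \<ge> 3/2*(Q*c)" using a m2 assms unfolding Q P_def by simp
  hence h: "P - 1 \<ge> 3*m/2*c*P" unfolding Q_def by (simp add: algebra_simps)
  have "1 - 1/P = (P-1)/P" using P by (simp add: field_simps)
  also have "\<dots> \<ge> 3*m/2*c" using h P by (simp add: pos_le_divide_eq)
  finally show ?thesis by (simp add: P_def)
qed
lemma polyB: fixes m c :: real assumes "0\<le>m" "m\<le>1" "0 \<le> c" "c \<le> 0.3679"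
  shows "1 - (1+m)^2/(4*(1+m+m^2/2+m^3/6)) \<ge> (2-m/2)*c"
proof -
  define P where "P = 1+m+m^2/2+m^3/6"
  have P: "P \<ge> 1" using assms unfolding P_def by simp
  define Q where "Q = 4*P*(2-m/2)"
  have Q: "Q = 8 + 6*m + 2*m^2 + m^3/3 - m^4/3" unfolding Q_def P_def
    by (simp add: field_simps power2_eq_square power3_eq_cube power4_eq_xxxx)
  have e: "4*P - (1+m)^2 = 3 + 2*m + m^2 + 2/3*m^3" unfolding P_def
    by (simp add: algebra_simps power2_eq_square power3_eq_cube)
  have a: "Q*c \<le> Q*(3679/10000)" using assms P unfolding Q_def by (intro mult_left_mono) auto
  have m2: "0 \<le> m^3" "0 \<le> m^4" using assms by auto
  have sq: "0 \<le> m^2 - 78/100*m + 1521/10000"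
  proof -
    have "0 \<le> (m - 39/100)^2" by simp
    thus ?thesis by (simp add: power2_eq_square algebra_simps)
  qed
  have "4*P - (1+m)^2 \<ge> Q*c" using a m2 sq assms e Q by linarith
  hence h: "4*P - (1+m)^2 \<ge> (2-m/2)*c*(4*P)" unfolding Q_def by (simp add: algebra_simps)
  have "1 - (1+m)^2/(4*P) = (4*P - (1+m)^2)/(4*P)" using P by (simp add: field_simps)
  also have "\<dots> \<ge> (2-m/2)*c" using h P by (simp add: pos_le_divide_eq)
  finally show ?thesis by (simp add: P_def)
qed

lemma exp_taylor_lower:
  fixes x :: real assumes "0 \<le> x"
  shows "(\<Sum>k<n. x^k / fact k) \<le> exp x"
proof -
  have s: "(\<lambda>k. x^k /\<^sub>R fact k) sums exp x" by (rule exp_converges)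
  have "(\<Sum>k<n. x^k /\<^sub>R fact k) \<le> (\<Sum>k. x^k /\<^sub>R fact k)"
    using s assms by (intro sum_le_suminf) (auto simp: sums_summable)
  then show ?thesis using s by (simp add: sums_unique[symmetric] divide_inverse mult.commute)
qed
lemma e_low: "(2.7182::real) \<le> exp 1"
proof -
  have "(\<Sum>k<8. (1::real)^k / fact k) \<le> exp 1" by (rule exp_taylor_lower) simp
  moreover have "(\<Sum>k<8. (1::real)^k / fact k) \<ge> 2.7182"
    by (simp add: numeral_eq_Suc fact_numeral lessThan_Suc)
  ultimately show ?thesis by linarith
qed
lemma ex_low: fixes m::real assumes "0\<le>m" shows "1+m+m^2/2+m^3/6 \<le> exp m"
proof -
  have "(\<Sum>k<4. m^k / fact k) \<le> exp m" by (rule exp_taylor_lower) fact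
  then show ?thesis by (simp add: numeral_eq_Suc lessThan_Suc fact_numeral power2_eq_square power3_eq_cube)
qed

lemma key: fixes m t :: real assumes "0\<le>m" "m\<le>1" "0\<le>t" "t \<le> 1-m"
  shows "1 - exp (-m) * (1-t/2)^2 \<ge> 2*t*(1/exp 1) + 3*m/2*(1/exp 1)"
proof -
  define c :: real where "c = 1/exp 1"
  define x where "x = exp (-m)"
  define P where "P = 1+m+m^2/2+m^3/6"
  have P: "P \<ge> 1" using assms unfolding P_def by simp
  have c0: "0 \<le> c" unfolding c_def by simp
  have c1: "c \<le> 0.3679"
  proof -
    have "c \<le> 1/2.7182" unfolding c_def using e_low by (intro divide_left_mono) auto
    thus ?thesis by simp
  qed
  have x0: "0 \<le> x" unfolding x_def by simp
  have xP: "x \<le> 1/P"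
  proof -
    have "P \<le> exp m" unfolding P_def using ex_low assms by simp
    hence "1/exp m \<le> 1/P" using P by (intro divide_left_mono) auto
    thus ?thesis unfolding x_def by (simp add: exp_minus divide_inverse)
  qed
  have i: "1 - x \<ge> 3*m/2*c" using polyA[OF assms(1,2) c0 c1] xP unfolding P_def by linarith
  have "x*((1+m)^2/4) \<le> (1/P)*((1+m)^2/4)" using xP by (intro mult_right_mono) auto
  moreover have "1 - (1+m)^2/(4*P) \<ge> (2-m/2)*c" using polyB[OF assms(1,2) c0 c1] unfolding P_def .
  moreover have "(1/P)*((1+m)^2/4) = (1+m)^2/(4*P)" by simp
  ultimately have ii: "1 - x*((1+m)^2/4) \<ge> (2-m/2)*c" by linarith
  show ?thesis
  proof (cases "m = 1")
    case True
    hence "t = 0" using assms by simp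
    thus ?thesis using i True unfolding c_def x_def by simp
  next
    case False
    define T where "T = 1 - m"
    have T: "T > 0" using False assms unfolding T_def by simp
    have id: "T*(1 - x*(1-t/2)^2) = (T-t)*(1-x) + t*(1 - x*((1+m)^2/4)) + x*(t*T*(T-t)/4)"
      unfolding T_def power2_eq_square by (simp add: field_simps)
    have r1: "(T-t)*(1-x) \<ge> (T-t)*(3*m/2*c)" using i assms unfolding T_def by (intro mult_left_mono) auto
    have r2: "t*(1 - x*((1+m)^2/4)) \<ge> t*((2-m/2)*c)" using ii assms by (intro mult_left_mono) auto
    have r3: "x*(t*T*(T-t)/4) \<ge> 0" using x0 assms T unfolding T_def by simp
    have eq: "(T-t)*(3*m/2*c) + t*((2-m/2)*c) = T*(2*t*c + 3*m/2*c)"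
      unfolding T_def by (simp add: field_simps)
    have "T*(1 - x*(1-t/2)^2) \<ge> T*(2*t*c + 3*m/2*c)" using id r1 r2 r3 eq by linarith
    hence "1 - x*(1-t/2)^2 \<ge> 2*t*c + 3*m/2*c" using T by simp
    thus ?thesis unfolding c_def x_def .
  qed
qed

theorem lemma3p3:
  fixes \<eta>1 \<eta>2 \<eta>3 zm zb :: real
  assumes "0 \<le> \<eta>1" "\<eta>1 \<le> 1" "0 \<le> \<eta>3" "\<eta>3 \<le> 1" "0 \<le> \<eta>2"
    and "zm = min \<eta>2 1"
    and "zb = min (\<eta>1 + \<eta>2 + \<eta>3) 1 - zm"
  shows "(\<eta>1 + \<eta>3 - \<eta>1 * \<eta>3) * exp (- zm) + 1 - exp (- zm)
           \<ge> 2 / exp 1 * zb + 3 / (2 * exp 1) * zm"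
proof -
  define s where "s = \<eta>1 + \<eta>3"
  define q where "q = (1-\<eta>1)*(1-\<eta>3)"
  have m: "0 \<le> zm" "zm \<le> 1" using assms by auto
  have t: "0 \<le> zb" "zb \<le> 1 - zm" "zb \<le> s" using assms unfolding s_def by auto
  have q1: "q \<le> (1-s/2)^2"
  proof -
    have "(1-s/2)^2 - q = ((\<eta>1-\<eta>3)/2)^2" unfolding q_def s_def by (simp add: power2_eq_square algebra_simps)
    thus ?thesis by (metis diff_ge_0_iff_ge zero_le_power2)
  qed
  have "(1-s/2)^2 \<le> (1-zb/2)^2" using t assms unfolding s_def by (intro power_mono) auto
  hence "exp (-zm) * q \<le> exp (-zm) * (1-zb/2)^2" using q1 by (intro mult_left_mono) auto
  moreover have "(\<eta>1 + \<eta>3 - \<eta>1 * \<eta>3) * exp (- zm) + 1 - exp (- zm) = 1 - exp (-zm) * q"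
    unfolding q_def by (simp add: algebra_simps)
  moreover have "2 / exp 1 * zb + 3 / (2 * exp 1) * zm = 2*zb*(1/exp 1) + 3*zm/2*(1/exp 1)" by simp
  ultimately show ?thesis using key[OF m t(1,2)] by linarith
qed
end
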